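(* Let $L$ spin-orbitals be indexed by $\{1,\dots,L\}$ and $1\le N_{\mathrm{occ}}<L$; an o-operator is $\hat a^\dagger_p$ or $\hat a_p$ with $p\le N_{\mathrm{occ}}$, a v-operator one with $p>N_{\mathrm{occ}}$, and an arbitrary operator is a creation or annihilation operator whose spin-orbital is not specified to be occupied or virtual (neither an o- nor a v-operator). Let $\hat C$ be a chain of $n$ excitation operators $\hat E^a_i=\hat a^\dagger_a\hat a_i$ and $n$ deexcitation operators $\hat D^i_a=\hat a^\dagger_i\hat a_a$ ($i\le N_{\mathrm{occ}}<a$), and let $S=s_1\cdots s_{2n}$ be the word obtained by replacing each deexcitation operator by "(" and each excitation operator by ")". Let $N\ge1$ and $K\in\{0,\dots,2n\}$, and let $\hat C^N_K$ be the chain obtained from $\hat C$ by inserting, immediately after its $K$-th (de)excitation operator (read from left to right), $N$ arbitrary creation operators followed by $N$ arbitrary annihilation operators. For any chain $\hat X$ of elementary operators (expanding each (de)excitation operator into its two factors), let $\mathcal W(\hat X)$ be the number of partitions of its elementary operators into pairs such that every pair $(x,y)$, with $x$ to the left of $y$, satisfies either: $x$ is a creation operator, $y$ is an annihilation operator, and neither is a v-operator; or: $x$ is an annihilation operator, $y$ is a creation operator, and neither is an o-operator. Then: (i) if $S$ is not a Dyck word, $\mathcal W(\hat C^N_K)=0$; (ii) if $S$ is a Dyck word, then $$\mathcal W(\hat C^N_K)=N!\,\mathcal M^N_{d_K}\,\mathcal W(\hat C),\qquad \mathcal M^N_{d_K}=\sum_{\ell=0}^{\min(N,d_K)}\binom{N}{\ell}^2\binom{d_K+N-\ell}{N},$$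 where $d_K$ is the number of "(" minus the number of ")" among $s_1,\dots,s_K$ (so $d_0=0$).
   Context: A Dyck word is a finite word over $\{(,)\}$ with as many opening as closing brackets, every prefix of which contains at least as many opening as closing brackets. Motivation: partitions into pairs are full contractions (Wick's theorem) relative to the Fermi vacuum (Slater determinant with spin-orbitals $1,\dots,N_{\mathrm{occ}}$ occupied), and the allowed pairs are exactly those whose contraction value, given by $\langle \hat a^\dagger_r\hat a_s\rangle=\delta_{rs}n_rn_s$ and $\langle \hat a_s\hat a^\dagger_r\rangle=\delta_{rs}(1-n_r)(1-n_s)$ with $n_p$ the occupation number ($1$ for o-, $0$ for v-operators, undetermined for arbitrary operators) and zero for contractions of two creation or two annihilation operators, is not forced to vanish; $\mathcal W$ counts these "well" full contractions. The inserted operators are regarded as distinct objects. *)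

theory Defs
  imports Main
begin

text \<open>An elementary operator: (is_creation, spin-orbital). The spin-orbital is
  Some p for a specified orbital p, None for an arbitrary operator.\<close>
type_synonym elop = "bool \<times> nat option"

definition is_o :: "nat \<Rightarrow> elop \<Rightarrow> bool" where
  "is_o Nocc x = (\<exists>p. snd x = Some p \<and> p \<le> Nocc)"

definition is_v :: "nat \<Rightarrow> elop \<Rightarrow> bool" where
  "is_v Nocc x = (\<exists>p. snd x = Some p \<and> Nocc < p)"

definition allowed_pair :: "nat \<Rightarrow> elop \<Rightarrow> elop \<Rightarrow> bool" where
  "allowed_pair Nocc x y =
     ((fst x \<and> \<not> fst y \<and> \<not> is_v Nocc x \<and> \<not> is_v Nocc y) \<or>
      (\<not> fst x \<and> fst y \<and> \<not> is_o Nocc x \<and> \<not> is_o Nocc y))"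

definition pair_partitions :: "nat \<Rightarrow> (nat \<times> nat) set set" where
  "pair_partitions m = {P. P \<subseteq> {(i,j). i < j \<and> j < m} \<and>
      (\<forall>k<m. \<exists>!q. q \<in> P \<and> (fst q = k \<or> snd q = k))}"

definition W :: "nat \<Rightarrow> elop list \<Rightarrow> nat" where
  "W Nocc X = card {P \<in> pair_partitions (length X).
      \<forall>(i,j)\<in>P. allowed_pair Nocc (X ! i) (X ! j)}"

text \<open>A (de)excitation operator: (is_deexcitation, i, a).
  Excitation E^a_i = a^dag_a a_i, deexcitation D^i_a = a^dag_i a_a.\<close>
type_synonym exop = "bool \<times> nat \<times> nat"

fun expand :: "exop \<Rightarrow> elop list" where
  "expand (True, i, a) = [(True, Some i), (False, Some a)]"
| "expand (False, i, a) = [(True, Some a), (False, Some i)]"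

definition expand_chain :: "exop list \<Rightarrow> elop list" where
  "expand_chain C = concat (map expand C)"

definition insert_chain :: "exop list \<Rightarrow> nat \<Rightarrow> nat \<Rightarrow> elop list" where
  "insert_chain C N K = expand_chain (take K C) @ replicate N (True, None)
      @ replicate N (False, None) @ expand_chain (drop K C)"

text \<open>Words over {(,)}: True = "(", False = ")".\<close>
definition word_of :: "exop list \<Rightarrow> bool list" where
  "word_of C = map fst C"

definition height :: "bool list \<Rightarrow> int" where
  "height w = int (count_list w True) - int (count_list w False)"

definition dyck :: "bool list \<Rightarrow> bool" where
  "dyck w = (height w = 0 \<and> (\<forall>k \<le> length w. 0 \<le> height (take k w)))"

definition Mcoef :: "nat \<Rightarrow> nat \<Rightarrow> nat" where
  "Mcoef N d = (\<Sum>l = 0..min N d. (N choose l)^2 * ((d + N - l) choose N))"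

end

theory Submission
  imports Defs "HOL-Library.Multiset"
begin


datatype cl = OC | OA | VC | VA | AC | AA

lemma UNIV_cl: "(UNIV :: cl set) = {OC, OA, VC, VA, AC, AA}"
  by (auto, case_tac x, auto)

fun okC :: "cl \<Rightarrow> cl \<Rightarrow> bool" where
  "okC OC x = (x = OA \<or> x = AA)"
| "okC AC x = (x = OA \<or> x = AA)"
| "okC VA x = (x = VC \<or> x = AC)"
| "okC AA x = (x = VC \<or> x = AC)"
| "okC OA x = False"
| "okC VC x = False"

fun cls :: "nat \<Rightarrow> elop \<Rightarrow> cl" where
  "cls Nocc (b, None) = (if b then AC else AA)"
| "cls Nocc (b, Some q) = (if q \<le> Nocc then (if b then OC else OA) else (if b then VC else VA))"

lemma allowed_cls: "allowed_pair Nocc x y = okC (cls Nocc x) (cls Nocc y)"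
  apply (cases x; cases y)
  apply (rename_tac b1 o1 b2 o2)
  apply (case_tac o1; case_tac o2)
  apply (auto simp: allowed_pair_def is_o_def is_v_def)
  done

fun F :: "cl multiset \<Rightarrow> cl list \<Rightarrow> nat" where
  "F M [] = (if M = {#} then 1 else 0)"
| "F M (OC#xs) = F (add_mset OC M) xs"
| "F M (VA#xs) = F (add_mset VA M) xs"
| "F M (OA#xs) = F (add_mset OA M) xs + count M OC * F (M - {#OC#}) xs + count M AC * F (M - {#AC#}) xs"
| "F M (VC#xs) = F (add_mset VC M) xs + count M VA * F (M - {#VA#}) xs + count M AA * F (M - {#AA#}) xs"
| "F M (AC#xs) = F (add_mset AC M) xs + count M VA * F (M - {#VA#}) xs + count M AA * F (M - {#AA#}) xs"
| "F M (AA#xs) = F (add_mset AA M) xs + count M OC * F (M - {#OC#}) xs + count M AC * F (M - {#AC#}) xs"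

lemma F_Cons_gen: "F M (c#xs) = F (add_mset c M) xs +
   (\<Sum>y\<in>UNIV. if okC y c then count M y * F (M - {#y#}) xs else 0)"
  by (cases c) (simp_all add: UNIV_cl)

lemma F_fatal: "count M OA > 0 \<or> count M VC > 0 \<Longrightarrow> F M xs = 0"
proof (induction xs arbitrary: M)
  case Nil
  then show ?case by auto
next
  case (Cons c xs)
  have h: "\<And>y. okC y c \<Longrightarrow> count (M - {#y#}) OA > 0 \<or> count (M - {#y#}) VC > 0"
    using Cons.prems by (case_tac y) auto
  have "F (add_mset c M) xs = 0" using Cons.prems by (intro Cons.IH) auto
  moreover have "\<And>y. okC y c \<Longrightarrow> F (M - {#y#}) xs = 0" using h Cons.IH by blast
  moreover have "(\<Sum>y\<in>UNIV. if okC y c then count M y * F (M - {#y#}) xs else 0) = 0"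
    by (rule sum.neutral) (auto simp: \<open>\<And>y. okC y c \<Longrightarrow> F (M - {#y#}) xs = 0\<close>)
  ultimately show ?case by (simp only: F_Cons_gen)
qed

definition st :: "nat \<Rightarrow> nat \<Rightarrow> nat \<Rightarrow> nat \<Rightarrow> cl multiset" where
  "st a c p m = replicate_mset a OC + replicate_mset c VA + replicate_mset p AC + replicate_mset m AA"

lemma st_count[simp]: "count (st a c p m) OC = a" "count (st a c p m) VA = c"
   "count (st a c p m) AC = p" "count (st a c p m) AA = m"
   "count (st a c p m) OA = 0" "count (st a c p m) VC = 0"
  by (auto simp: st_def)

lemma st_eq_iff: "M = st a c p m \<longleftrightarrow> (\<forall>y. count M y = count (st a c p m) y)"
  by (simp add: multiset_eq_iff)

lemma count_st: "count (st a c p m) y = (case y of OC \<Rightarrow> a | VA \<Rightarrow> c | AC \<Rightarrow> p | AA \<Rightarrow> m | _ \<Rightarrow> 0)"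
  by (cases y) auto

lemma st_ops[simp]:
  "st a c p m - {#OC#} = st (a-1) c p m"
  "st a c p m - {#VA#} = st a (c-1) p m"
  "st a c p m - {#AC#} = st a c (p-1) m"
  "st a c p m - {#AA#} = st a c p (m-1)"
  "add_mset OC (st a c p m) = st (Suc a) c p m"
  "add_mset VA (st a c p m) = st a (Suc c) p m"
  "add_mset AC (st a c p m) = st a c (Suc p) m"
  "add_mset AA (st a c p m) = st a c p (Suc m)"
  by (auto simp: multiset_eq_iff count_st split: cl.splits)

lemma st_empty[simp]: "st a c p m = {#} \<longleftrightarrow> a = 0 \<and> c = 0 \<and> p = 0 \<and> m = 0"
  by (auto simp: st_def)

lemma st0: "st 0 0 0 0 = {#}" by simp

lemma F_OA_st[simp]: "F (add_mset OA M) xs = 0"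
  by (rule F_fatal) simp
lemma F_VC_st[simp]: "F (add_mset VC M) xs = 0"
  by (rule F_fatal) simp

fun clsx :: "bool \<Rightarrow> cl list" where
  "clsx True = [OC, VA]"
| "clsx False = [VC, OA]"

fun g :: "nat \<Rightarrow> bool list \<Rightarrow> nat" where
  "g h [] = (if h = 0 then 1 else 0)"
| "g h (True#s) = g (Suc h) s"
| "g h (False#s) = h * g (h-1) s"

fun w :: "nat \<Rightarrow> bool list \<Rightarrow> nat" where
  "w h [] = 1"
| "w h (True#s) = w (Suc h) s"
| "w h (False#s) = h * w (h-1) s"

fun hf :: "nat \<Rightarrow> bool list \<Rightarrow> nat" where
  "hf h [] = h"
| "hf h (True#s) = hf (Suc h) s"
| "hf h (False#s) = hf (h-1) s"

fun ff :: "nat \<Rightarrow> nat \<Rightarrow> nat" where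
  "ff c 0 = 1"
| "ff c (Suc i) = c * ff (c-1) i"

lemma mult_pred: "(a::nat) * f (a - 1 + p) = a * f (a + p - 1)"
  by (cases a) auto

lemma L1: "F (st a c p m) (concat (map clsx s)) = g (a+p) s * g (c+m) s"
proof (induction s arbitrary: a c p m)
  case Nil
  then show ?case by simp
next
  case (Cons b s)
  show ?case
  proof (cases b)
    case True
    then show ?thesis using Cons.IH by simp
  next
    case False
    have "F (st a c p m) (concat (map clsx (b#s))) =
       c * (a * F (st (a-1) (c-1) p m) (concat (map clsx s)) + p * F (st a (c-1) (p-1) m) (concat (map clsx s)))
     + m * (a * F (st (a-1) c p (m-1)) (concat (map clsx s)) + p * F (st a c (p-1) (m-1)) (concat (map clsx s)))"
      using False by simp
    also have "\<dots> = c * (a * g (a-1+p) s * g (c-1+m) s + p * g (a+(p-1)) s * g (c-1+m) s)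
          + m * (a * g (a-1+p) s * g (c+(m-1)) s + p * g (a+(p-1)) s * g (c+(m-1)) s)"
      using Cons.IH by (simp add: mult.assoc)
    also have "\<dots> = (a+p) * g (a+p-1) s * ((c+m) * g (c+m-1) s)"
      by (cases a; cases c; cases p; cases m) (auto simp: algebra_simps)
    finally show ?thesis using False by simp
  qed
qed

lemma L2: "F (st a c 0 0) (concat (map clsx s) @ rest) = w a s * w c s * F (st (hf a s) (hf c s) 0 0) rest"
proof (induction s arbitrary: a c)
  case Nil
  then show ?case by simp
next
  case (Cons b s)
  then show ?case by (cases b) auto
qed



lemma pascal_sum: "(\<Sum>i\<le>Suc k. (Suc k choose i) * f i) =
   (\<Sum>i\<le>k. (k choose i) * f i) + (\<Sum>i\<le>k. (k choose i) * f (Suc i))"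
proof -
  have "(\<Sum>i\<le>Suc k. (Suc k choose i) * f i) = f 0 + (\<Sum>i\<le>k. (Suc k choose Suc i) * f (Suc i))"
    by (subst sum.atMost_Suc_shift) (simp del: sum.atMost_Suc)
  also have "\<dots> = f 0 + (\<Sum>i\<le>k. (k choose Suc i) * f (Suc i)) + (\<Sum>i\<le>k. (k choose i) * f (Suc i))"
    by (simp add: sum.distrib algebra_simps)
  also have "f 0 + (\<Sum>i\<le>k. (k choose Suc i) * f (Suc i)) = (\<Sum>i\<le>Suc k. (k choose i) * f i)"
    by (subst sum.atMost_Suc_shift) (simp del: sum.atMost_Suc)
  also have "\<dots> = (\<Sum>i\<le>k. (k choose i) * f i)"
    by simp
  finally show ?thesis .
qed

lemma L3: "F (st a c p 0) (replicate k AC @ rest) =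
   (\<Sum>i\<le>k. (k choose i) * (ff c i * F (st a (c-i) (p+k-i) 0) rest))"
proof (induction k arbitrary: c p)
  case 0
  then show ?case by simp
next
  case (Suc k)
  have "F (st a c p 0) (replicate (Suc k) AC @ rest) =
     F (st a c (Suc p) 0) (replicate k AC @ rest) + c * F (st a (c-1) p 0) (replicate k AC @ rest)"
    by simp
  also have "\<dots> = (\<Sum>i\<le>k. (k choose i) * (ff c i * F (st a (c-i) (p + Suc k - i) 0) rest))
      + (\<Sum>i\<le>k. (k choose i) * (ff c (Suc i) * F (st a (c - Suc i) (p + Suc k - Suc i) 0) rest))"
    unfolding Suc.IH by (simp add: sum_distrib_left algebra_simps)
  also have "\<dots> = (\<Sum>i\<le>Suc k. (Suc k choose i) * (ff c i * F (st a (c-i) (p + Suc k - i) 0) rest))"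
    by (rule pascal_sum[symmetric])
  finally show ?case .
qed

lemma L4: "F (st a c p m) (replicate l AA @ concat (map clsx s)) =
   (\<Sum>j\<le>l. (l choose j) * (ff (a+p) j * g (a+p-j) s * g (c+m+l-j) s))"
proof (induction l arbitrary: a c p m)
  case 0
  then show ?case by (simp add: L1)
next
  case (Suc l)
  define X where "X h h' = (\<Sum>j\<le>l. (l choose j) * (ff h j * g (h-j) s * g (h'+l-j) s))" for h h'
  have "F (st a c p m) (replicate (Suc l) AA @ concat (map clsx s)) =
     F (st a c p (Suc m)) (replicate l AA @ concat (map clsx s))
     + a * F (st (a-1) c p m) (replicate l AA @ concat (map clsx s))
     + p * F (st a c (p-1) m) (replicate l AA @ concat (map clsx s))"
    by simp
  also have "\<dots> = X (a+p) (Suc (c+m)) + a * X (a-1+p) (c+m) + p * X (a+(p-1)) (c+m)"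
    unfolding Suc.IH X_def by simp
  also have "\<dots> = X (a+p) (Suc (c+m)) + (a+p) * X (a+p-1) (c+m)"
    by (cases a; cases p) (auto simp: algebra_simps)
  also have "\<dots> = (\<Sum>j\<le>l. (l choose j) * (ff (a+p) j * g (a+p-j) s * g (c+m+Suc l-j) s))
      + (\<Sum>j\<le>l. (l choose j) * (ff (a+p) (Suc j) * g (a+p-Suc j) s * g (c+m+Suc l-Suc j) s))"
    unfolding X_def by (simp add: sum_distrib_left algebra_simps)
  also have "\<dots> = (\<Sum>j\<le>Suc l. (Suc l choose j) * (ff (a+p) j * g (a+p-j) s * g (c+m+Suc l-j) s))"
    by (rule pascal_sum[symmetric])
  finally show ?case .
qed

lemma g_split: "g h (s1 @ s2) = w h s1 * g (hf h s1) s2"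
  by (induction h s1 rule: w.induct) auto

definition ht :: "bool list \<Rightarrow> int" where
  "ht s = int (count_list s True) - int (count_list s False)"

lemma height_ht: "height s = ht s" by (simp add: height_def ht_def)

lemma ht_simps[simp]: "ht [] = 0" "ht (True#s) = ht s + 1" "ht (False#s) = ht s - 1"
  by (auto simp: ht_def)

lemma w_hf: "w h s \<noteq> 0 \<Longrightarrow> int (hf h s) = int h + ht s"
  by (induction h s rule: w.induct) auto

lemma g_ht: "g h s \<noteq> 0 \<Longrightarrow> int h + ht s = 0 \<and> (\<forall>k\<le>length s. 0 \<le> int h + ht (take k s))"
proof (induction h s rule: g.induct)
  case (1 h)
  then show ?case by (auto split: if_splits)
next
  case (2 h s)
  then have IH: "int (Suc h) + ht s = 0 \<and> (\<forall>k\<le>length s. 0 \<le> int (Suc h) + ht (take k s))" by simp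
  show ?case
  proof (intro conjI allI impI)
    show "int h + ht (True # s) = 0" using IH by simp
    fix k assume "k \<le> length (True # s)"
    then show "0 \<le> int h + ht (take k (True # s))"
      using IH by (cases k) auto
  qed
next
  case (3 h s)
  then have h0: "h > 0" and "g (h-1) s \<noteq> 0" by auto
  then have IH: "int (h-1) + ht s = 0 \<and> (\<forall>k\<le>length s. 0 \<le> int (h-1) + ht (take k s))" using 3 by simp
  show ?case
  proof (intro conjI allI impI)
    show "int h + ht (False # s) = 0" using IH h0 by simp
    fix k assume "k \<le> length (False # s)"
    then show "0 \<le> int h + ht (take k (False # s))"
      using IH h0 by (cases k) auto
  qed
qed

lemma ff_zero: "n < k \<Longrightarrow> ff n k = 0"
  apply (induction n k rule: ff.induct)
   apply simp
  apply (case_tac c)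
   apply auto
  done

lemma ff_fact: "k \<le> n \<Longrightarrow> ff n k * fact (n-k) = fact n"
proof (induction n k rule: ff.induct)
  case (1 c)
  then show ?case by simp
next
  case (2 c i)
  then obtain c' where c: "c = Suc c'" by (cases c) auto
  have "ff c (Suc i) * fact (c - Suc i) = c * (ff c' i * fact (c' - i))" using c by (simp add: algebra_simps)
  also have "\<dots> = c * fact c'" using 2 c by simp
  also have "\<dots> = fact c" using c by simp
  finally show ?case .
qed

lemma ff_prod: assumes "i \<le> d" "i \<le> N"
  shows "ff d i * ff (d + (N-i)) (N-i) = fact N * ((d + N - i) choose N)"
proof -
  have e1: "ff d i * fact (d-i) = fact d" using ff_fact assms by simp
  have e2: "ff (d + (N-i)) (N-i) * fact d = fact (d + (N-i))" using ff_fact[of "N-i" "d+(N-i)"] by simp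
  have e3: "fact N * fact (d - i) * ((d + N - i) choose N) = (fact (d + N - i) :: nat)"
    using binomial_fact_lemma[of N "d+N-i"] assms by (simp add: algebra_simps)
  have "ff d i * ff (d + (N-i)) (N-i) * fact (d-i) = fact (d + (N-i))"
    using e1 e2 by (metis mult.commute mult.left_commute)
  also have "\<dots> = fact N * ((d + N - i) choose N) * fact (d-i)"
    using e3 assms by (simp add: algebra_simps)
  finally show ?thesis by simp
qed



instance cl :: finite by standard (simp add: UNIV_cl)

type_synonym pe = "nat \<times> elop"

definition PPs :: "nat \<Rightarrow> pe set \<Rightarrow> pe set \<Rightarrow> (pe \<times> pe) set set" where
  "PPs Nocc U A = {P. P \<subseteq> {(x,y). x \<in> A \<and> y \<in> A \<and> fst x < fst y \<and>
      allowed_pair Nocc (snd x) (snd y) \<and> \<not> (x \<in> U \<and> y \<in> U)} \<and>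
      (\<forall>z\<in>A. \<exists>!q. q \<in> P \<and> (fst q = z \<or> snd q = z))}"

lemma PPs_sub: "P \<in> PPs N U A \<Longrightarrow> (x,y) \<in> P \<Longrightarrow>
   x \<in> A \<and> y \<in> A \<and> fst x < fst y \<and> allowed_pair N (snd x) (snd y) \<and> \<not> (x \<in> U \<and> y \<in> U)"
  unfolding PPs_def by blast

lemma PPs_cover: "P \<in> PPs N U A \<Longrightarrow> z \<in> A \<Longrightarrow> \<exists>q\<in>P. fst q = z \<or> snd q = z"
  unfolding PPs_def by blast

lemma PPs_uniq: "P \<in> PPs N U A \<Longrightarrow> z \<in> A \<Longrightarrow> q \<in> P \<Longrightarrow> q' \<in> P \<Longrightarrow>
   fst q = z \<or> snd q = z \<Longrightarrow> fst q' = z \<or> snd q' = z \<Longrightarrow> q = q'"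
  unfolding PPs_def by blast

lemma PPs_intro:
  assumes "\<And>x y. (x,y) \<in> P \<Longrightarrow> x \<in> A \<and> y \<in> A \<and> fst x < fst y \<and>
      allowed_pair N (snd x) (snd y) \<and> \<not> (x \<in> U \<and> y \<in> U)"
    and "\<And>z. z \<in> A \<Longrightarrow> \<exists>q\<in>P. fst q = z \<or> snd q = z"
    and "\<And>z q q'. z \<in> A \<Longrightarrow> q \<in> P \<Longrightarrow> q' \<in> P \<Longrightarrow>
        fst q = z \<or> snd q = z \<Longrightarrow> fst q' = z \<or> snd q' = z \<Longrightarrow> q = q'"
  shows "P \<in> PPs N U A"
  unfolding PPs_def using assms by blast

lemma PPs_finite: "finite A \<Longrightarrow> finite (PPs N U A)"
proof -
  assume "finite A"
  have "PPs N U A \<subseteq> Pow (A \<times> A)" unfolding PPs_def by auto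
  then show ?thesis using \<open>finite A\<close> by (meson finite_Pow_iff finite_SigmaI finite_subset)
qed

definition posl :: "nat \<Rightarrow> elop list \<Rightarrow> pe set" where
  "posl k X = {(k+i, X!i) | i. i < length X}"

lemma posl_Nil[simp]: "posl k [] = {}" by (simp add: posl_def)

lemma posl_Cons: "posl k (x#xs) = insert (k,x) (posl (Suc k) xs)"
  unfolding posl_def
  by (auto simp: less_Suc_eq_0_disj)

lemma posl_fst: "z \<in> posl k X \<Longrightarrow> k \<le> fst z"
  by (auto simp: posl_def)

lemma posl_finite: "finite (posl k X)"
  unfolding posl_def by (rule finite_image_set) simp

lemma group_sum:
  fixes h :: "'a \<Rightarrow> cl"
  assumes "finite U"
  shows "(\<Sum>u\<in>U. \<phi> (h u)) = (\<Sum>y\<in>UNIV. count (image_mset h (mset_set U)) y * \<phi> y)"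
  using assms
proof (induction U rule: finite_induct)
  case empty
  then show ?case by simp
next
  case (insert a V)
  have "(\<Sum>y\<in>UNIV. count (image_mset h (mset_set (insert a V))) y * \<phi> y)
     = (\<Sum>y\<in>UNIV. count (image_mset h (mset_set V)) y * \<phi> y + (if y = h a then \<phi> y else 0))"
    using insert by (intro sum.cong) auto
  also have "\<dots> = (\<Sum>y\<in>UNIV. count (image_mset h (mset_set V)) y * \<phi> y) + \<phi> (h a)"
    by (simp add: sum.distrib)
  finally show ?case using insert by simp
qed



lemma S_bij:
  assumes PU: "u \<in> U" and zU: "z \<notin> U" and uB: "u \<notin> B" and zB: "z \<notin> B"
    and lt: "fst u < fst z" and ok: "allowed_pair N (snd u) (snd z)"
  shows "bij_betw (\<lambda>P. P - {(u,z)}) {P \<in> PPs N U (insert z (U \<union> B)). (u,z) \<in> P}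
           (PPs N (U - {u}) ((U - {u}) \<union> B))"
proof (rule bij_betw_byWitness[where f' = "\<lambda>Q. insert (u,z) Q"])
  let ?A = "insert z (U \<union> B)"
  let ?A' = "(U - {u}) \<union> B"
  show "\<forall>P\<in>{P \<in> PPs N U ?A. (u,z) \<in> P}. insert (u,z) (P - {(u,z)}) = P" by auto
  show "\<forall>Q\<in>PPs N (U - {u}) ?A'. insert (u,z) Q - {(u,z)} = Q"
  proof
    fix Q assume Q: "Q \<in> PPs N (U - {u}) ?A'"
    have "(u,z) \<notin> Q" using PPs_sub[OF Q, of u z] uB by auto
    then show "insert (u,z) Q - {(u,z)} = Q" by auto
  qed
  show "(\<lambda>P. P - {(u,z)}) ` {P \<in> PPs N U ?A. (u,z) \<in> P} \<subseteq> PPs N (U - {u}) ?A'"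
  proof safe
    fix P assume P: "P \<in> PPs N U ?A" and uz: "(u,z) \<in> P"
    have notuz: "a \<noteq> u \<and> a \<noteq> z \<and> b \<noteq> u \<and> b \<noteq> z" if ab: "(a,b) \<in> P" "(a,b) \<noteq> (u,z)" for a b
    proof -
      have uA: "u \<in> ?A" and zA: "z \<in> ?A" using PU by auto
      have 1: "a \<noteq> u"
      proof
        assume e: "a = u"
        have "(a,b) = (u,z)" by (rule PPs_uniq[OF P uA ab(1) uz]) (simp_all add: e)
        with ab(2) show False by simp
      qed
      have 2: "a \<noteq> z"
      proof
        assume e: "a = z"
        have "(a,b) = (u,z)" by (rule PPs_uniq[OF P zA ab(1) uz]) (simp_all add: e)
        with ab(2) show False by simp
      qed
      have 3: "b \<noteq> u"
      proof
        assume e: "b = u"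
        have "(a,b) = (u,z)" by (rule PPs_uniq[OF P uA ab(1) uz]) (simp_all add: e)
        with ab(2) show False by simp
      qed
      have 4: "b \<noteq> z"
      proof
        assume e: "b = z"
        have "(a,b) = (u,z)" by (rule PPs_uniq[OF P zA ab(1) uz]) (simp_all add: e)
        with ab(2) show False by simp
      qed
      show ?thesis using 1 2 3 4 by blast
    qed
    show "P - {(u,z)} \<in> PPs N (U - {u}) ?A'"
    proof (rule PPs_intro)
      fix a b assume ab: "(a,b) \<in> P - {(u,z)}"
      then have ab1: "(a,b) \<in> P" and ab2: "(a,b) \<noteq> (u,z)" by blast+
      note s = PPs_sub[OF P ab1] and n = notuz[OF ab1 ab2]
      show "a \<in> ?A' \<and> b \<in> ?A' \<and> fst a < fst b \<and> allowed_pair N (snd a) (snd b) \<and> \<not> (a \<in> U - {u} \<and> b \<in> U - {u})"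
        using s n by blast
    next
      fix w assume w: "w \<in> ?A'"
      then have "w \<in> ?A" "w \<noteq> u" "w \<noteq> z" using uB zU zB by blast+
      then obtain q where q: "q \<in> P" "fst q = w \<or> snd q = w" using PPs_cover[OF P] by blast
      then have "q \<noteq> (u,z)" using \<open>w \<noteq> u\<close> \<open>w \<noteq> z\<close> by force
      then show "\<exists>q\<in>P - {(u,z)}. fst q = w \<or> snd q = w" using q by blast
    next
      fix w q q' assume "w \<in> ?A'" "q \<in> P - {(u,z)}" "q' \<in> P - {(u,z)}"
        "fst q = w \<or> snd q = w" "fst q' = w \<or> snd q' = w"
      then show "q = q'" using PPs_uniq[OF P, of w q q'] by blast
    qed
  qed
  show "(\<lambda>Q. insert (u,z) Q) ` PPs N (U - {u}) ?A' \<subseteq> {P \<in> PPs N U ?A. (u,z) \<in> P}"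
  proof safe
    fix Q assume Q: "Q \<in> PPs N (U - {u}) ?A'"
    have nq: "a \<noteq> u \<and> a \<noteq> z \<and> b \<noteq> u \<and> b \<noteq> z" if "(a,b) \<in> Q" for a b
      using PPs_sub[OF Q that] uB zB zU by blast
    show "insert (u,z) Q \<in> PPs N U ?A"
    proof (rule PPs_intro)
      fix a b assume ab: "(a,b) \<in> insert (u,z) Q"
      then show "a \<in> ?A \<and> b \<in> ?A \<and> fst a < fst b \<and> allowed_pair N (snd a) (snd b) \<and> \<not> (a \<in> U \<and> b \<in> U)"
      proof
        assume "(a,b) = (u,z)" then show ?thesis using PU zU lt ok by simp
      next
        assume ab': "(a,b) \<in> Q"
        show ?thesis using PPs_sub[OF Q ab'] nq[OF ab'] by blast
      qed
    next
      fix w assume w: "w \<in> ?A"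
      show "\<exists>q\<in>insert (u,z) Q. fst q = w \<or> snd q = w"
      proof (cases "w = u \<or> w = z")
        case True then show ?thesis by force
      next
        case False
        then have "w \<in> ?A'" using w by blast
        then show ?thesis using PPs_cover[OF Q] by blast
      qed
    next
      fix w q q' assume w: "w \<in> ?A" and q: "q \<in> insert (u,z) Q" and q': "q' \<in> insert (u,z) Q"
        and hq: "fst q = w \<or> snd q = w" and hq': "fst q' = w \<or> snd q' = w"
      show "q = q'"
      proof (cases "w = u \<or> w = z")
        case True
        have "q \<notin> Q"
        proof
          assume qin: "q \<in> Q"
          have "fst q \<noteq> u \<and> fst q \<noteq> z \<and> snd q \<noteq> u \<and> snd q \<noteq> z" using nq[of "fst q" "snd q"] qin by simp
          then show False using hq True by blast
        qed
        then have "q = (u,z)" using q by blast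
        moreover have "q' \<notin> Q"
        proof
          assume qin: "q' \<in> Q"
          have "fst q' \<noteq> u \<and> fst q' \<noteq> z \<and> snd q' \<noteq> u \<and> snd q' \<noteq> z" using nq[of "fst q'" "snd q'"] qin by simp
          then show False using hq' True by blast
        qed
        then have "q' = (u,z)" using q' by blast
        ultimately show ?thesis by simp
      next
        case False
        then have "w \<in> ?A'" using w by blast
        moreover have "q \<in> Q" using q hq False by force
        moreover have "q' \<in> Q" using q' hq' False by force
        ultimately show ?thesis using PPs_uniq[OF Q _ _ _ hq hq'] by blast
      qed
    qed
  qed
qed



lemma PPs_base: "PPs N U U = (if U = {} then {{}} else {})"
proof (cases "U = {}")
  case True
  then show ?thesis unfolding PPs_def by auto
next
  case False
  then obtain z where z: "z \<in> U" by blast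
  have "P \<notin> PPs N U U" for P
  proof
    assume P: "P \<in> PPs N U U"
    obtain q where q: "q \<in> P" using PPs_cover[OF P z] by blast
    obtain a b where "q = (a,b)" by (cases q)
    then show False using PPs_sub[OF P, of a b] q by blast
  qed
  then show ?thesis using False by auto
qed

lemma bridge:
  "finite U \<Longrightarrow> \<forall>u\<in>U. fst u < k \<Longrightarrow>
   card (PPs N U (U \<union> posl k X)) = F (image_mset (cls N \<circ> snd) (mset_set U)) (map (cls N) X)"
proof (induction X arbitrary: U k)
  case Nil
  then show ?case by (simp add: PPs_base mset_set_empty_iff)
next
  case (Cons x xs U k)
  define z where "z = (k, x)"
  define B where "B = posl (Suc k) xs"
  define A where "A = insert z (U \<union> B)"
  have A_eq: "U \<union> posl k (x # xs) = A" unfolding A_def B_def z_def posl_Cons by auto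
  have finA: "finite A" unfolding A_def B_def using Cons.prems posl_finite by auto
  have zU: "z \<notin> U" using Cons.prems unfolding z_def by auto
  have zB: "z \<notin> B" unfolding B_def z_def using posl_fst by fastforce
  have uB: "u \<notin> B" if "u \<in> U" for u
    using that Cons.prems posl_fst unfolding B_def by fastforce
  define Uok where "Uok = {u \<in> U. allowed_pair N (snd u) x}"
  define S0 where "S0 = PPs N (insert z U) A"
  define S where "S u = {P \<in> PPs N U A. (u,z) \<in> P}" for u
  have decomp: "PPs N U A = S0 \<union> (\<Union>u\<in>Uok. S u)"
  proof
    show "S0 \<union> (\<Union>u\<in>Uok. S u) \<subseteq> PPs N U A"
      unfolding S0_def S_def PPs_def by blast
    show "PPs N U A \<subseteq> S0 \<union> (\<Union>u\<in>Uok. S u)"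
    proof
      fix P assume P: "P \<in> PPs N U A"
      show "P \<in> S0 \<union> (\<Union>u\<in>Uok. S u)"
      proof (cases "\<exists>a b. (a,b) \<in> P \<and> a \<in> insert z U \<and> b \<in> insert z U")
        case False
        have "P \<in> S0" unfolding S0_def
        proof (rule PPs_intro)
          fix a b assume "(a,b) \<in> P"
          then show "a \<in> A \<and> b \<in> A \<and> fst a < fst b \<and> allowed_pair N (snd a) (snd b) \<and> \<not> (a \<in> insert z U \<and> b \<in> insert z U)"
            using PPs_sub[OF P, of a b] False by blast
        next
          fix w assume "w \<in> A" then show "\<exists>q\<in>P. fst q = w \<or> snd q = w" using PPs_cover[OF P] by blast
        next
          fix w q q' assume "w \<in> A" "q \<in> P" "q' \<in> P" "fst q = w \<or> snd q = w" "fst q' = w \<or> snd q' = w"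
          then show "q = q'" using PPs_uniq[OF P] by blast
        qed
        then show ?thesis by blast
      next
        case True
        then obtain a b where ab: "(a,b) \<in> P" "a \<in> insert z U" "b \<in> insert z U" by blast
        note s = PPs_sub[OF P ab(1)]
        have "a \<noteq> z"
        proof
          assume "a = z"
          then have "b \<in> U" using s ab by blast
          then have "fst b < k" using Cons.prems by blast
          then show False using s \<open>a = z\<close> unfolding z_def by simp
        qed
        then have aU: "a \<in> U" using ab by blast
        then have bz: "b = z" using s ab by blast
        then have "a \<in> Uok" using aU s unfolding Uok_def z_def by simp
        moreover have "P \<in> S a" using P ab(1) bz unfolding S_def by blast
        ultimately show ?thesis by blast
      qed
    qed
  qed
  have finS: "finite (PPs N U' A)" for U' using PPs_finite[OF finA] .
  have disj1: "S0 \<inter> (\<Union>u\<in>Uok. S u) = {}"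
  proof -
    have "P \<notin> S0" if "u \<in> Uok" "P \<in> S u" for u P
    proof
      assume "P \<in> S0"
      moreover have "(u,z) \<in> P" using that unfolding S_def by blast
      moreover have "u \<in> insert z U" using that unfolding Uok_def by blast
      ultimately show False using PPs_sub[of P N "insert z U" A u z] unfolding S0_def by blast
    qed
    then show ?thesis by blast
  qed
  have disj2: "\<forall>u\<in>Uok. \<forall>v\<in>Uok. u \<noteq> v \<longrightarrow> S u \<inter> S v = {}"
  proof (intro ballI impI)
    fix u v assume "u \<in> Uok" "v \<in> Uok" "u \<noteq> v"
    show "S u \<inter> S v = {}"
    proof (rule ccontr)
      assume "S u \<inter> S v \<noteq> {}"
      then obtain P where P: "P \<in> PPs N U A" "(u,z) \<in> P" "(v,z) \<in> P" unfolding S_def by blast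
      have "z \<in> A" unfolding A_def by blast
      then have "(u,z) = (v,z)" using PPs_uniq[OF P(1) _ P(2) P(3)] by simp
      then show False using \<open>u \<noteq> v\<close> by simp
    qed
  qed
  have finU: "finite Uok" unfolding Uok_def using Cons.prems by auto
  have card_split: "card (PPs N U A) = card S0 + (\<Sum>u\<in>Uok. card (S u))"
  proof -
    have f0: "finite S0" unfolding S0_def using finS .
    have fS: "\<forall>u\<in>Uok. finite (S u)" unfolding S_def using finS by auto
    have "card (PPs N U A) = card S0 + card (\<Union>u\<in>Uok. S u)"
      unfolding decomp using f0 fS finU disj1 by (intro card_Un_disjoint) auto
    also have "card (\<Union>u\<in>Uok. S u) = (\<Sum>u\<in>Uok. card (S u))"
      using finU fS disj2 by (intro card_UN_disjoint) auto
    finally show ?thesis .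
  qed
  define M where "M = image_mset (cls N \<circ> snd) (mset_set U)"
  have cardS0: "card S0 = F (add_mset (cls N x) M) (map (cls N) xs)"
  proof -
    have "card S0 = card (PPs N (insert z U) (insert z U \<union> posl (Suc k) xs))"
      unfolding S0_def A_def B_def by (simp add: insert_commute)
    also have "\<dots> = F (image_mset (cls N \<circ> snd) (mset_set (insert z U))) (map (cls N) xs)"
      using Cons.prems by (intro Cons.IH) (auto simp: z_def)
    also have "image_mset (cls N \<circ> snd) (mset_set (insert z U)) = add_mset (cls N x) M"
      using Cons.prems zU by (simp add: M_def z_def)
    finally show ?thesis .
  qed
  have cardS: "card (S u) = F (M - {#cls N (snd u)#}) (map (cls N) xs)" if u: "u \<in> Uok" for u
  proof -
    have uU: "u \<in> U" using u unfolding Uok_def by blast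
    have "card (S u) = card (PPs N (U - {u}) ((U - {u}) \<union> B))"
      unfolding S_def A_def
      by (rule bij_betw_same_card, rule S_bij[OF uU zU uB[OF uU] zB])
        (use u Cons.prems in \<open>auto simp: Uok_def z_def\<close>)
    also have "\<dots> = F (image_mset (cls N \<circ> snd) (mset_set (U - {u}))) (map (cls N) xs)"
      unfolding B_def using Cons.prems by (intro Cons.IH) auto
    also have "image_mset (cls N \<circ> snd) (mset_set (U - {u})) = M - {#cls N (snd u)#}"
    proof -
      have "U = insert u (U - {u})" using uU by blast
      then have "mset_set U = add_mset u (mset_set (U - {u}))"
        using Cons.prems by (metis finite_Diff mset_set.insert Diff_iff singletonI)
      then show ?thesis unfolding M_def by simp
    qed
    finally show ?thesis .
  qed
  have "(\<Sum>u\<in>Uok. card (S u)) = (\<Sum>u\<in>Uok. F (M - {#cls N (snd u)#}) (map (cls N) xs))"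
    using cardS by simp
  also have "\<dots> = (\<Sum>u\<in>U. (\<lambda>y. if okC y (cls N x) then F (M - {#y#}) (map (cls N) xs) else 0) ((cls N \<circ> snd) u))"
    unfolding Uok_def using Cons.prems by (simp add: sum.inter_filter allowed_cls cong: if_cong)
  also have "\<dots> = (\<Sum>y\<in>UNIV. count M y * (if okC y (cls N x) then F (M - {#y#}) (map (cls N) xs) else 0))"
    unfolding M_def using Cons.prems by (intro group_sum) auto
  also have "\<dots> = (\<Sum>y\<in>UNIV. if okC y (cls N x) then count M y * F (M - {#y#}) (map (cls N) xs) else 0)"
    by (intro sum.cong) auto
  finally have last: "(\<Sum>u\<in>Uok. card (S u)) = \<dots>" .
  have FM: "F M (map (cls N) (x#xs)) = F (add_mset (cls N x) M) (map (cls N) xs) +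
     (\<Sum>y\<in>UNIV. if okC y (cls N x) then count M y * F (M - {#y#}) (map (cls N) xs) else 0)"
    by (simp only: list.map F_Cons_gen)
  show ?case
    unfolding A_eq card_split cardS0 M_def[symmetric] FM last ..
qed



lemma posl0_mem: "z \<in> posl 0 X \<longleftrightarrow> fst z < length X \<and> snd z = X ! fst z"
  unfolding posl_def by (cases z) auto

lemma W_PPs: "W N X = card (PPs N {} (posl 0 X))"
proof -
  define e where "e = (\<lambda>(i::nat,j::nat). ((i, X!i), (j, X!j)))"
  define d where "d = (\<lambda>(a::pe,b::pe). (fst a, fst b))"
  define L where "L = {P \<in> pair_partitions (length X). \<forall>(i,j)\<in>P. allowed_pair N (X ! i) (X ! j)}"
  have e_simp: "e (i,j) = ((i, X!i), (j, X!j))" for i j unfolding e_def by simp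
  have d_simp: "d (a,b) = (fst a, fst b)" for a b unfolding d_def by simp
  have "bij_betw (\<lambda>P. e ` P) L (PPs N {} (posl 0 X))"
  proof (rule bij_betw_byWitness[where f' = "\<lambda>Q. d ` Q"])
    show "\<forall>P\<in>L. d ` e ` P = P"
    proof
      fix P :: "(nat \<times> nat) set"
      have "d (e q) = q" for q by (cases q) (simp add: e_simp d_simp)
      then show "d ` e ` P = P" by (simp add: image_image)
    qed
    show "\<forall>Q\<in>PPs N {} (posl 0 X). e ` d ` Q = Q"
    proof
      fix Q assume Q: "Q \<in> PPs N {} (posl 0 X)"
      have "e (d q) = q" if "q \<in> Q" for q
      proof -
        obtain a b where q: "q = (a,b)" by (cases q)
        have "a \<in> posl 0 X" "b \<in> posl 0 X" using PPs_sub[OF Q, of a b] that q by auto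
        then show ?thesis unfolding q d_simp e_simp posl0_mem by (cases a, cases b) auto
      qed
      then show "e ` d ` Q = Q" by (simp add: image_image)
    qed
    show "(\<lambda>P. e ` P) ` L \<subseteq> PPs N {} (posl 0 X)"
    proof safe
      fix P assume P: "P \<in> L"
      then have Psub: "P \<subseteq> {(i,j). i < j \<and> j < length X}"
        and Pcov: "\<forall>k<length X. \<exists>!q. q \<in> P \<and> (fst q = k \<or> snd q = k)"
        and Pal: "\<forall>(i,j)\<in>P. allowed_pair N (X ! i) (X ! j)"
        unfolding L_def pair_partitions_def by auto
      show "e ` P \<in> PPs N {} (posl 0 X)"
      proof (rule PPs_intro)
        fix a b assume "(a,b) \<in> e ` P"
        then obtain i j where ij: "(i,j) \<in> P" "a = (i, X!i)" "b = (j, X!j)" unfolding e_def by auto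
        then show "a \<in> posl 0 X \<and> b \<in> posl 0 X \<and> fst a < fst b \<and> allowed_pair N (snd a) (snd b) \<and> \<not> (a \<in> {} \<and> b \<in> {})"
          using Psub Pal by (auto simp: posl0_mem)
      next
        fix w assume w: "w \<in> posl 0 X"
        then have k: "fst w < length X" and wX: "w = (fst w, X ! fst w)" by (auto simp: posl0_mem prod_eq_iff)
        then obtain q where q: "q \<in> P" "fst q = fst w \<or> snd q = fst w" using Pcov by blast
        obtain i j where qij: "q = (i,j)" by (cases q)
        have "e q \<in> e ` P" using q by blast
        moreover have "fst (e q) = w \<or> snd (e q) = w" using q wX unfolding qij e_simp by auto
        ultimately show "\<exists>q\<in>e ` P. fst q = w \<or> snd q = w" by blast
      next
        fix w q q' assume w: "w \<in> posl 0 X" and q: "q \<in> e ` P" and q': "q' \<in> e ` P"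
          and hq: "fst q = w \<or> snd q = w" and hq': "fst q' = w \<or> snd q' = w"
        then have k: "fst w < length X" by (auto simp: posl0_mem)
        obtain r where r: "r \<in> P" "q = e r" using q by blast
        obtain r' where r': "r' \<in> P" "q' = e r'" using q' by blast
        have "fst r = fst w \<or> snd r = fst w" using hq r(2) by (cases r) (auto simp: e_simp)
        moreover have "fst r' = fst w \<or> snd r' = fst w" using hq' r'(2) by (cases r') (auto simp: e_simp)
        ultimately have "r = r'" using Pcov k r(1) r'(1) by blast
        then show "q = q'" using r r' by simp
      qed
    qed
    show "(\<lambda>Q. d ` Q) ` PPs N {} (posl 0 X) \<subseteq> L"
    proof safe
      fix Q assume Q: "Q \<in> PPs N {} (posl 0 X)"
      have sub: "fst a < length X \<and> snd a = X ! fst a \<and> fst b < length X \<and> snd b = X ! fst b \<and> fst a < fst b \<and> allowed_pair N (snd a) (snd b)"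
        if "(a,b) \<in> Q" for a b using PPs_sub[OF Q that] by (auto simp: posl0_mem)
      have s1: "d ` Q \<subseteq> {(i,j). i < j \<and> j < length X}"
      proof
        fix p assume "p \<in> d ` Q"
        then obtain a b where "(a,b) \<in> Q" "p = (fst a, fst b)" by (auto simp: d_def)
        then show "p \<in> {(i,j). i < j \<and> j < length X}" using sub by auto
      qed
      have s2: "\<forall>k<length X. \<exists>!p. p \<in> d ` Q \<and> (fst p = k \<or> snd p = k)"
      proof (intro allI impI)
        fix k assume k: "k < length X"
        define w where "w = (k, X ! k)"
        have w: "w \<in> posl 0 X" unfolding w_def posl0_mem using k by simp
        obtain q where q: "q \<in> Q" "fst q = w \<or> snd q = w" using PPs_cover[OF Q w] by blast
        show "\<exists>!p. p \<in> d ` Q \<and> (fst p = k \<or> snd p = k)"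
        proof
          have "d q \<in> d ` Q" using q(1) by (rule imageI)
          moreover have "fst (d q) = k \<or> snd (d q) = k" using q(2) unfolding w_def by (cases q) (auto simp: d_simp)
          ultimately show "d q \<in> d ` Q \<and> (fst (d q) = k \<or> snd (d q) = k)" by blast
        next
          fix p assume p: "p \<in> d ` Q \<and> (fst p = k \<or> snd p = k)"
          then obtain a b where ab: "(a,b) \<in> Q" "p = (fst a, fst b)" by (auto simp: d_def)
          have "fst (a,b) = w \<or> snd (a,b) = w"
            using p ab sub[OF ab(1)] unfolding w_def by (cases a, cases b) auto
          then have "(a,b) = q" using PPs_uniq[OF Q w ab(1) q(1)] q(2) by blast
          then show "p = d q" using ab(2) d_simp[of a b] by simp
        qed
      qed
      have s3: "\<forall>(i,j)\<in>d ` Q. allowed_pair N (X ! i) (X ! j)"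
      proof
        fix p assume "p \<in> d ` Q"
        then obtain a b where ab: "(a,b) \<in> Q" "p = (fst a, fst b)" by (auto simp: d_def)
        have "allowed_pair N (snd a) (snd b)" "snd a = X ! fst a" "snd b = X ! fst b" using sub[OF ab(1)] by blast+
        then show "case p of (i, j) \<Rightarrow> allowed_pair N (X ! i) (X ! j)" using ab(2) by simp
      qed
      show "d ` Q \<in> L"
        unfolding L_def pair_partitions_def using s1 s2 s3 by blast
    qed
  qed
  then show ?thesis unfolding W_def L_def[symmetric] by (rule bij_betw_same_card)
qed

lemma W_F: "W N X = F {#} (map (cls N) X)"
  using bridge[of "{}" 0 N X] by (simp add: W_PPs)



lemma ht_append: "ht (a @ b) = ht a + ht b"
proof (induction a)
  case Nil then show ?case by simp
next
  case (Cons x a) then show ?case by (cases x) auto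
qed

lemma ht_map_fst: "ht (map fst C) = 2 * int (length (filter fst C)) - int (length C)"
proof (induction C)
  case Nil then show ?case by simp
next
  case (Cons x C) then show ?case by (cases "fst x") auto
qed

lemma cls_expand: "\<forall>(b,i,a)\<in>set C. i \<le> Nocc \<and> Nocc < a \<Longrightarrow>
   map (cls Nocc) (expand_chain C) = concat (map clsx (map fst C))"
proof (induction C)
  case Nil then show ?case by (simp add: expand_chain_def)
next
  case (Cons x C)
  obtain b i a where x: "x = (b,i,a)" by (cases x)
  have "i \<le> Nocc" "Nocc < a" using Cons.prems x by auto
  then have "map (cls Nocc) (expand x) = clsx (fst x)" using x by (cases b) auto
  moreover have "map (cls Nocc) (expand_chain C) = concat (map clsx (map fst C))"
    using Cons by auto
  ultimately show ?case by (simp add: expand_chain_def)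
qed

lemma sum_single:
  fixes N :: nat
  assumes "k \<le> N" "\<And>j. j \<le> N \<Longrightarrow> j \<noteq> k \<Longrightarrow> f j = 0"
  shows "(\<Sum>j\<le>N. f j) = f k"
proof -
  have "(\<Sum>j\<le>N. f j) = (\<Sum>j\<le>N. if j = k then f j else 0)"
    using assms by (intro sum.cong) auto
  also have "\<dots> = f k" using assms(1) by (simp add: sum.delta)
  finally show ?thesis .
qed

lemma arith_final: "(\<Sum>i\<le>N. (N choose i)^2 * (ff d i * ff (d + (N-i)) (N-i))) = fact N * Mcoef N d"
proof -
  have "(\<Sum>i\<le>N. (N choose i)^2 * (ff d i * ff (d + (N-i)) (N-i)))
      = (\<Sum>i=0..min N d. (N choose i)^2 * (fact N * ((d + N - i) choose N)))"
  proof (rule sum.mono_neutral_cong_right)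
    show "finite {..N}" by simp
    show "{0..min N d} \<subseteq> {..N}" by auto
    show "\<forall>i\<in>{..N} - {0..min N d}. (N choose i)^2 * (ff d i * ff (d + (N-i)) (N-i)) = 0"
      by (auto simp: ff_zero)
    show "\<And>i. i \<in> {0..min N d} \<Longrightarrow> (N choose i)^2 * (ff d i * ff (d + (N-i)) (N-i)) = (N choose i)^2 * (fact N * ((d + N - i) choose N))"
      using ff_prod by auto
  qed
  also have "\<dots> = fact N * Mcoef N d"
    unfolding Mcoef_def by (simp add: sum_distrib_left algebra_simps)
  finally show ?thesis .
qed

theorem mainTheorem5:
  fixes L Nocc n N K :: nat and C :: "exop list"
  assumes "1 \<le> Nocc" and "Nocc < L"
    and "length C = 2 * n"
    and "length (filter fst C) = n"
    and "\<forall>(b, i, a) \<in> set C. 1 \<le> i \<and> i \<le> Nocc \<and> Nocc < a \<and> a \<le> L"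
    and "1 \<le> N" and "K \<le> 2 * n"
  shows "(\<not> dyck (word_of C) \<longrightarrow> W Nocc (insert_chain C N K) = 0) \<and>
         (dyck (word_of C) \<longrightarrow>
            W Nocc (insert_chain C N K) =
              fact N * Mcoef N (nat (height (take K (word_of C)))) * W Nocc (expand_chain C))"
proof -
  define S where "S = map fst C"
  define S1 where "S1 = take K S"
  define S2 where "S2 = drop K S"
  define d where "d = hf 0 S1"
  have SS: "S = S1 @ S2" unfolding S1_def S2_def by simp
  have idx: "\<forall>(b,i,a)\<in>set C. i \<le> Nocc \<and> Nocc < a" using assms(5) by auto
  have idx1: "\<forall>(b,i,a)\<in>set (take K C). i \<le> Nocc \<and> Nocc < a"
    using idx set_take_subset by fastforce
  have idx2: "\<forall>(b,i,a)\<in>set (drop K C). i \<le> Nocc \<and> Nocc < a"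
    using idx set_drop_subset by fastforce
  have htS: "ht S = 0" unfolding S_def ht_map_fst using assms(3,4) by simp
  have WC: "W Nocc (expand_chain C) = g 0 S * g 0 S"
    unfolding W_F cls_expand[OF idx] S_def using L1[of 0 0 0 0 "map fst C"] by (simp add: st0)
  have mapI: "map (cls Nocc) (insert_chain C N K) =
     concat (map clsx S1) @ (replicate N AC @ (replicate N AA @ concat (map clsx S2)))"
    unfolding insert_chain_def S1_def S2_def S_def
    using cls_expand[OF idx1] cls_expand[OF idx2] by (simp add: take_map drop_map)
  define Sig where "Sig = (\<Sum>i\<le>N. (N choose i)^2 * (ff d i * ff (d + (N-i)) (N-i)))"
  have WI0: "W Nocc (insert_chain C N K) = w 0 S1 * w 0 S1 *
     (\<Sum>i\<le>N. (N choose i) * (ff d i * (\<Sum>j\<le>N. (N choose j) *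
        (ff (d + (0 + N - i)) j * g (d + (0 + N - i) - j) S2 * g (d - i + 0 + N - j) S2))))"
  proof -
    have "W Nocc (insert_chain C N K) = F (st 0 0 0 0) (map (cls Nocc) (insert_chain C N K))"
      unfolding W_F by (simp add: st0)
    also have "\<dots> = w 0 S1 * w 0 S1 * F (st d d 0 0) (replicate N AC @ (replicate N AA @ concat (map clsx S2)))"
      unfolding mapI L2 d_def ..
    also have "\<dots> = w 0 S1 * w 0 S1 * (\<Sum>i\<le>N. (N choose i) * (ff d i * F (st d (d-i) (0+N-i) 0) (replicate N AA @ concat (map clsx S2))))"
      unfolding L3 ..
    also have "\<dots> = w 0 S1 * w 0 S1 *
     (\<Sum>i\<le>N. (N choose i) * (ff d i * (\<Sum>j\<le>N. (N choose j) *
        (ff (d + (0 + N - i)) j * g (d + (0 + N - i) - j) S2 * g (d - i + 0 + N - j) S2))))"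
      unfolding L4 ..
    finally show ?thesis .
  qed
  have WI: "W Nocc (insert_chain C N K) = Sig * W Nocc (expand_chain C)"
  proof (cases "w 0 S1 = 0")
    case True
    then show ?thesis unfolding WI0 WC SS g_split by simp
  next
    case False
    have dS1: "int d = ht S1" unfolding d_def using w_hf[OF False] by simp
    have dS2: "int d + ht S2 = 0" using htS dS1 unfolding SS ht_append by simp
    have gz: "g h S2 = 0" if "h \<noteq> d" for h
    proof (rule ccontr)
      assume "g h S2 \<noteq> 0"
      then have "int h + ht S2 = 0" using g_ht by blast
      then show False using dS2 that by simp
    qed
    have hterm: "(N choose i) * (ff d i * (\<Sum>j\<le>N. (N choose j) *
        (ff (d + (0 + N - i)) j * g (d + (0 + N - i) - j) S2 * g (d - i + 0 + N - j) S2)))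
       = (N choose i)^2 * (ff d i * ff (d + (N-i)) (N-i)) * (g d S2 * g d S2)" if i: "i \<le> N" for i
    proof (cases "i \<le> d")
      case False
      then show ?thesis by (simp add: ff_zero)
    next
      case True
      have "(\<Sum>j\<le>N. (N choose j) *
        (ff (d + (0 + N - i)) j * g (d + (0 + N - i) - j) S2 * g (d - i + 0 + N - j) S2))
        = (N choose (N-i)) * (ff (d + (0 + N - i)) (N-i) * g (d + (0 + N - i) - (N-i)) S2 * g (d - i + 0 + N - (N-i)) S2)"
      proof (rule sum_single)
        show "N - i \<le> N" by simp
        fix j assume j: "j \<le> N" "j \<noteq> N - i"
        show "(N choose j) * (ff (d + (0 + N - i)) j * g (d + (0 + N - i) - j) S2 * g (d - i + 0 + N - j) S2) = 0"
        proof (cases "d + (0 + N - i) < j")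
          case True then show ?thesis by (simp add: ff_zero)
        next
          case False
          then have "d + (0 + N - i) - j \<noteq> d" using j i by auto
          then show ?thesis using gz by simp
        qed
      qed
      also have "\<dots> = (N choose i) * (ff (d + (N - i)) (N-i) * g d S2 * g d S2)"
        using True i by (simp add: binomial_symmetric[symmetric])
      finally show ?thesis by (simp add: power2_eq_square algebra_simps)
    qed
    have "W Nocc (insert_chain C N K) = w 0 S1 * w 0 S1 *
       (\<Sum>i\<le>N. (N choose i)^2 * (ff d i * ff (d + (N-i)) (N-i)) * (g d S2 * g d S2))"
    proof -
      have "(\<Sum>i\<le>N. (N choose i) * (ff d i * (\<Sum>j\<le>N. (N choose j) *
        (ff (d + (0 + N - i)) j * g (d + (0 + N - i) - j) S2 * g (d - i + 0 + N - j) S2))))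
        = (\<Sum>i\<le>N. (N choose i)^2 * (ff d i * ff (d + (N-i)) (N-i)) * (g d S2 * g d S2))"
        by (rule sum.cong[OF refl], rule hterm, simp)
      then show ?thesis unfolding WI0 by simp
    qed
    also have "\<dots> = w 0 S1 * w 0 S1 * (Sig * (g d S2 * g d S2))"
      unfolding Sig_def sum_distrib_right ..
    also have "\<dots> = Sig * ((w 0 S1 * g d S2) * (w 0 S1 * g d S2))"
      by (simp only: mult_ac)
    also have "\<dots> = Sig * W Nocc (expand_chain C)"
      unfolding WC SS g_split d_def ..
    finally show ?thesis .
  qed
  have wordS: "word_of C = S" unfolding word_of_def S_def ..
  show ?thesis
  proof (intro conjI impI)
    assume nd: "\<not> dyck (word_of C)"
    have "g 0 S = 0"
    proof (rule ccontr)
      assume "g 0 S \<noteq> 0"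
      then have "dyck S" using g_ht[of 0 S] unfolding dyck_def height_ht by simp
      then show False using nd wordS by simp
    qed
    then show "W Nocc (insert_chain C N K) = 0" unfolding WI WC by simp
  next
    assume dy: "dyck (word_of C)"
    show "W Nocc (insert_chain C N K) =
              fact N * Mcoef N (nat (height (take K (word_of C)))) * W Nocc (expand_chain C)"
    proof (cases "W Nocc (expand_chain C) = 0")
      case True then show ?thesis unfolding WI by simp
    next
      case False
      then have "w 0 S1 \<noteq> 0" unfolding WC SS g_split by auto
      then have "int d = ht S1" unfolding d_def using w_hf by fastforce
      then have "nat (height (take K (word_of C))) = d" unfolding wordS height_ht S1_def by simp
      then show ?thesis unfolding WI Sig_def arith_final by simp
    qed
  qed
qed


end
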